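(* Let $\kappa=4$ and let $\boldsymbol\pi,Q,U$ be as in the context, and suppose $\nu_{ijj}=0$ for all $1<i\le j\le 4$. Then, after possibly permuting the states (i.e., simultaneously permuting the entries of $\boldsymbol\pi$ and the rows of $U$) and multiplying some columns of $U$ by $-1$, one of the following holds: Case A: $\boldsymbol\pi=(1/4,1/4,1/4,1/4)$ and for some $b,c\ge0$ with $b^2+c^2=2$, $$U=\begin{pmatrix}1&c&b&1\\1&-c&-b&1\\1&-b&c&-1\\1&b&-c&-1\end{pmatrix};$$ Case B: $\boldsymbol\pi=(1/8,1/8,1/4,1/2)$ and $$U=\begin{pmatrix}1&2&\sqrt2&1\\1&-2&\sqrt2&1\\1&0&-\sqrt2&1\\1&0&0&-1\end{pmatrix}.$$
   Context: $\boldsymbol\pi=(\pi_1,\dots,\pi_4)$ with $\pi_i>0$, $\sum\pi_i=1$; $Q$ a $4\times4$ matrix with positive off-diagonal entries, zero row sums, $\operatorname{diag}(\boldsymbol\pi)Q$ symmetric. $U$ is a real matrix with $Q=U\operatorname{diag}(0,\lambda_2,\lambda_3,\lambda_4)U^{-1}$, $0>\lambda_2\ge\lambda_3\ge\lambda_4$, $UU^T=\operatorname{diag}(\boldsymbol\pi)^{-1}$ (equivalently $U^T\operatorname{diag}(\boldsymbol\pi)U=I$), and first column $\mathbf 1$. $\nu_{ijk}=\sum_l\pi_lU_{li}U_{lj}U_{lk}$. *)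

theory Defs
  imports Complex_Main "Jordan_Normal_Form.Matrix" "HOL-Combinatorics.Permutations"
begin

text \<open>States and eigen-indices are 0-based: paper index k corresponds to k-1.\<close>

definition nu :: "(nat \<Rightarrow> real) \<Rightarrow> real mat \<Rightarrow> nat \<Rightarrow> nat \<Rightarrow> nat \<Rightarrow> real" where
  "nu p U i j k = (\<Sum>l<4. p l * U $$ (l, i) * U $$ (l, j) * U $$ (l, k))"

end

theory Submission
  imports Defs "Jordan_Normal_Form.Determinant"
begin

lemma sum4: "(\<Sum>(i::nat)<4. f i) = f 0 + f 1 + f 2 + (f 3 :: real)"
  by (simp add: numeral_eq_Suc lessThan_Suc)

lemma extract_facts:
  fixes p :: "nat \<Rightarrow> real" and U :: "real mat"
  assumes U_dim: "U \<in> carrier_mat 4 4"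
    and U_orth: "U * transpose_mat U = mat_diag 4 (\<lambda>i. 1 / p i)"
    and p_pos: "\<forall>i<4. p i > 0"
  shows "\<forall>l<4. \<forall>m<4. (\<Sum>k<4. U$$(l,k) * U$$(m,k)) = (if l=m then 1/p l else 0)"
    and "\<forall>i<4. \<forall>j<4. (\<Sum>l<4. p l * U$$(l,i) * U$$(l,j)) = (if i=j then 1 else 0)"
proof -
  show "\<forall>l<4. \<forall>m<4. (\<Sum>k<4. U$$(l,k) * U$$(m,k)) = (if l=m then 1/p l else 0)"
  proof (intro allI impI)
    fix l m :: nat assume lm: "l < 4" "m < 4"
    have "(U * transpose_mat U) $$ (l,m) = (\<Sum>k<4. U$$(l,k) * U$$(m,k))"
      using U_dim lm by (simp add: scalar_prod_def lessThan_atLeast0)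
    moreover have "(mat_diag 4 (\<lambda>i. 1 / p i)) $$ (l,m) = (if l=m then 1/p l else 0)"
      using lm by (simp add: mat_diag_def)
    ultimately show "(\<Sum>k<4. U$$(l,k) * U$$(m,k)) = (if l=m then 1/p l else 0)"
      using U_orth by simp
  qed
  define B where "B = transpose_mat U * mat_diag 4 p"
  have Bc: "B \<in> carrier_mat 4 4" using U_dim unfolding B_def by auto
  have "U * B = (U * transpose_mat U) * mat_diag 4 p"
    unfolding B_def using U_dim by (simp add: assoc_mult_mat[symmetric, of _ 4 4 _ 4 _ 4])
  also have "\<dots> = mat_diag 4 (\<lambda>i. 1 / p i * p i)" using U_orth by simp
  also have "\<dots> = 1\<^sub>m 4"
    using p_pos by (intro eq_matI) (auto simp: mat_diag_def)
  finally have "B * U = 1\<^sub>m 4" using mat_mult_left_right_inverse[OF U_dim Bc] by blast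
  moreover have "B = mat 4 4 (\<lambda>(i,j). U $$ (j,i) * p j)"
    unfolding B_def using U_dim by (subst mat_diag_mult_right[of _ 4]) auto
  ultimately have BU: "mat 4 4 (\<lambda>(i,j). U $$ (j,i) * p j) * U = 1\<^sub>m 4" by simp
  show "\<forall>i<4. \<forall>j<4. (\<Sum>l<4. p l * U$$(l,i) * U$$(l,j)) = (if i=j then 1 else 0)"
  proof (intro allI impI)
    fix i j :: nat assume ij: "i < 4" "j < 4"
    have "(mat 4 4 (\<lambda>(i,j). U $$ (j,i) * p j) * U) $$ (i,j) = (\<Sum>l<4. p l * U$$(l,i) * U$$(l,j))"
      using U_dim ij by (simp add: scalar_prod_def lessThan_atLeast0 mult_ac)
    then show "(\<Sum>l<4. p l * U$$(l,i) * U$$(l,j)) = (if i=j then 1 else 0)"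
      using BU ij by simp
  qed
qed

lemma expand:
  fixes u :: "nat \<Rightarrow> nat \<Rightarrow> real" and p :: "nat \<Rightarrow> real"
  assumes R: "\<forall>l<4. \<forall>m<4. (\<Sum>k<4. u k l * u k m) = (if l=m then 1/p l else 0)"
    and p_pos: "\<forall>i<4. p i > 0" and l: "l < 4"
  shows "f l = (\<Sum>k<4. (\<Sum>m<4. p m * f m * u k m) * u k l)"
proof -
  have "(\<Sum>k<4. (\<Sum>m<4. p m * f m * u k m) * u k l) = (\<Sum>k<4. \<Sum>m<4. p m * f m * (u k m * u k l))"
    by (simp add: sum_distrib_right sum_distrib_left mult_ac)
  also have "\<dots> = (\<Sum>m<4. p m * f m * (\<Sum>k<4. u k m * u k l))"
    by (subst sum.swap) (simp add: sum_distrib_left)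
  also have "\<dots> = (\<Sum>m<4. p m * f m * (if m = l then 1/p m else 0))"
    using R l by (intro sum.cong) auto
  also have "\<dots> = (\<Sum>m<4. if m = l then f l else 0)"
    using p_pos by (intro sum.cong) auto
  also have "\<dots> = f l" using l by simp
  finally show ?thesis by simp
qed

lemma squares:
  fixes u :: "nat \<Rightarrow> nat \<Rightarrow> real" and p :: "nat \<Rightarrow> real"
  assumes R: "\<forall>l<4. \<forall>m<4. (\<Sum>k<4. u k l * u k m) = (if l=m then 1/p l else 0)"
    and C: "\<forall>i<4. \<forall>j<4. (\<Sum>l<4. p l * u i l * u j l) = (if i=j then 1 else 0)"
    and p_pos: "\<forall>i<4. p i > 0"
    and u0: "\<forall>l<4. u 0 l = 1"
    and N: "\<forall>i j. 0 < i \<longrightarrow> i \<le> j \<longrightarrow> j < 4 \<longrightarrow> (\<Sum>l<4. p l * u i l * u j l * u j l) = 0"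
  shows "\<forall>l<4. (u 3 l)\<^sup>2 = 1"
    and "\<exists>a. \<forall>l<4. (u 2 l)\<^sup>2 = 1 + a * u 3 l"
    and "\<exists>b c. \<forall>l<4. (u 1 l)\<^sup>2 = 1 + b * u 2 l + c * u 3 l"
proof -
  have c0: "(\<Sum>m<4. p m * f m * u 0 m) = (\<Sum>m<4. p m * f m)" for f
    using u0 by (intro sum.cong) auto
  have Cjj: "(\<Sum>m<4. p m * (u j m)\<^sup>2) = 1" if "j < 4" for j
    using C that by (simp add: power2_eq_square mult_ac)
  have Nk: "(\<Sum>m<4. p m * (u j m)\<^sup>2 * u k m) = 0" if "0 < k" "k \<le> j" "j < 4" for j k
  proof -
    have "(\<Sum>l<4. p l * u k l * u j l * u j l) = 0" using N that by auto
    moreover have "(\<Sum>m<4. p m * (u j m)\<^sup>2 * u k m) = (\<Sum>l<4. p l * u k l * u j l * u j l)"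
      by (intro sum.cong) (auto simp: power2_eq_square)
    ultimately show ?thesis by simp
  qed
  show "\<forall>l<4. (u 3 l)\<^sup>2 = 1"
  proof (intro allI impI)
    fix l :: nat assume l: "l < 4"
    show "(u 3 l)\<^sup>2 = 1"
      apply (subst expand[OF R p_pos l, of "\<lambda>l. (u 3 l)\<^sup>2"])
      using l u0 c0 Cjj[of 3] Nk[of 1 3] Nk[of 2 3] Nk[of 3 3] by (simp add: sum4)
  qed
  show "\<exists>a. \<forall>l<4. (u 2 l)\<^sup>2 = 1 + a * u 3 l"
  proof (intro exI allI impI)
    fix l :: nat assume l: "l < 4"
    show "(u 2 l)\<^sup>2 = 1 + (\<Sum>m<4. p m * (u 2 m)\<^sup>2 * u 3 m) * u 3 l"
      apply (subst expand[OF R p_pos l, of "\<lambda>l. (u 2 l)\<^sup>2"])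
      using l u0 c0 Cjj[of 2] Nk[of 1 2] Nk[of 2 2] by (simp add: sum4)
  qed
  show "\<exists>b c. \<forall>l<4. (u 1 l)\<^sup>2 = 1 + b * u 2 l + c * u 3 l"
  proof (intro exI allI impI)
    fix l :: nat assume l: "l < 4"
    show "(u 1 l)\<^sup>2 = 1 + (\<Sum>m<4. p m * (u 1 m)\<^sup>2 * u 2 m) * u 2 l + (\<Sum>m<4. p m * (u 1 m)\<^sup>2 * u 3 m) * u 3 l"
      apply (subst expand[OF R p_pos l, of "\<lambda>l. (u 1 l)\<^sup>2"])
      using l u0 c0 Cjj[of 1] Nk[of 1 1] by (simp add: sum4)
  qed
qed


lemma sum_xyzw:
  assumes d: "distinct [x,y,z,w]" and lt: "x < 4" "y < 4" "z < 4" "w < (4::nat)"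
  shows "(\<Sum>i<4. f i) = f x + f y + f z + (f w :: real)"
proof -
  have sub: "{x,y,z,w} \<subseteq> {..<4}" using lt by auto
  have "card {x,y,z,w} = 4" using d by simp
  then have "{x,y,z,w} = {..<4}" using sub by (intro card_subset_eq) auto
  then have "(\<Sum>i<4. f i) = (\<Sum>i\<in>{x,y,z,w}. f i)" by simp
  also have "\<dots> = f x + f y + f z + f w" using d by (simp add: add.assoc)
  finally show ?thesis .
qed

lemma all4: "(\<forall>i::nat<4. P i) = (P 0 \<and> P 1 \<and> P 2 \<and> P 3)"
  by (auto simp: numeral_eq_Suc less_Suc_eq)

definition perm4 :: "nat \<Rightarrow> nat \<Rightarrow> nat \<Rightarrow> nat \<Rightarrow> nat \<Rightarrow> nat" where
  "perm4 x y z w = (\<lambda>i. if i = 0 then x else if i = 1 then y else if i = 2 then z else if i = 3 then w else i)"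

lemma perm4_permutes:
  assumes d: "distinct [x,y,z,w]" and lt: "x < 4" "y < 4" "z < 4" "w < (4::nat)"
  shows "perm4 x y z w permutes {..<4}"
proof -
  have "\<forall>i<4. \<forall>j<4. perm4 x y z w i = perm4 x y z w j \<longrightarrow> i = j" using d
    by (simp add: all4 perm4_def)
  then have "inj_on (perm4 x y z w) {..<4}" by (auto simp: inj_on_def)
  moreover have "\<forall>i<4. perm4 x y z w i < 4" using lt by (simp add: all4 perm4_def)
  then have "perm4 x y z w ` {..<4} \<subseteq> {..<4}" by auto
  ultimately have "bij_betw (perm4 x y z w) {..<4} {..<4}"
    by (simp add: endo_inj_surj bij_betw_def)
  moreover have "\<forall>i. i \<notin> {..<4} \<longrightarrow> perm4 x y z w i = i" by (auto simp: perm4_def)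
  ultimately show ?thesis using bij_imp_permutes by blast
qed


definition Hyp :: "(nat \<Rightarrow> real) \<Rightarrow> (nat \<Rightarrow> nat \<Rightarrow> real) \<Rightarrow> bool" where
  "Hyp p u \<longleftrightarrow> (\<forall>i<4. p i > 0) \<and> (\<forall>l<4. u 0 l = 1)
     \<and> (\<forall>i<4. \<forall>j<4. (\<Sum>l<4. p l * u i l * u j l) = (if i=j then 1 else 0))
     \<and> (\<forall>l<4. \<forall>m<4. l \<noteq> m \<longrightarrow> (\<Sum>k<4. u k l * u k m) = 0)
     \<and> (\<forall>l<4. (u 3 l)\<^sup>2 = 1) \<and> (\<exists>a. \<forall>l<4. (u 2 l)\<^sup>2 = 1 + a * u 3 l)
     \<and> (\<exists>b c. \<forall>l<4. (u 1 l)\<^sup>2 = 1 + b * u 2 l + c * u 3 l)"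

definition rowsA :: "real \<Rightarrow> real \<Rightarrow> real list list" where
  "rowsA b c = [[1, c, b, 1], [1, -c, -b, 1], [1, -b, c, -1], [1, b, -c, -1]]"
definition rowsB :: "real list list" where
  "rowsB = [[1, 2, sqrt 2, 1], [1, -2, sqrt 2, 1], [1, 0, -sqrt 2, 1], [1, 0, 0, -1]]"

definition Concl :: "(nat \<Rightarrow> real) \<Rightarrow> (nat \<Rightarrow> nat \<Rightarrow> real) \<Rightarrow> bool" where
  "Concl p u \<longleftrightarrow> (\<exists>\<sigma> s. \<sigma> permutes {..<4} \<and> (\<forall>j<4. s j = 1 \<or> s j = (-1::real)) \<and>
     (((\<forall>i<4. p (\<sigma> i) = 1/4) \<and> (\<exists>b c. b \<ge> 0 \<and> c \<ge> 0 \<and> b\<^sup>2 + c\<^sup>2 = 2 \<and>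
          (\<forall>i<4. \<forall>j<4. s j * u j (\<sigma> i) = rowsA b c ! i ! j)))
      \<or> (p (\<sigma> 0) = 1/8 \<and> p (\<sigma> 1) = 1/8 \<and> p (\<sigma> 2) = 1/4 \<and> p (\<sigma> 3) = 1/2 \<and>
          (\<forall>i<4. \<forall>j<4. s j * u j (\<sigma> i) = rowsB ! i ! j))))"

lemma sqrt2_cases: "(r::real)\<^sup>2 = 2 \<Longrightarrow> r = sqrt 2 \<or> r = - sqrt 2"
  by (metis power2_eq_iff real_sqrt_pow2 zero_le_numeral)

lemma coreB:
  assumes H: "Hyp p u" and d: "distinct [x,y,z,w]" and lt: "x < 4" "y < 4" "z < 4" "w < 4"
    and pat: "u 3 y = u 3 x" "u 3 z = u 3 x" "u 3 w = - u 3 x" "u 2 y = u 2 x" "u 2 z = - u 2 x"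
  shows "Concl p u"
proof -
  from H obtain a bb cc where pp: "\<forall>i<4. p i > 0" and u0: "\<forall>l<4. u 0 l = 1"
    and C: "\<forall>i<4. \<forall>j<4. (\<Sum>l<4. p l * u i l * u j l) = (if i=j then 1 else 0)"
    and sq3: "\<forall>l<4. (u 3 l)\<^sup>2 = 1" and sq2: "\<forall>l<4. (u 2 l)\<^sup>2 = 1 + a * u 3 l"
    and sq1: "\<forall>l<4. (u 1 l)\<^sup>2 = 1 + bb * u 2 l + cc * u 3 l"
    unfolding Hyp_def by blast
  have Cx: "p x * u i x * u j x + p y * u i y * u j y + p z * u i z * u j z + p w * u i w * u j w
      = (if i=j then 1 else 0)" if "i < 4" "j < 4" for i j
    using C that by (simp add: sum_xyzw[OF d lt])
  define e where "e = u 3 x"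
  define r where "r = u 2 x"
  have e2: "e\<^sup>2 = 1" using sq3 lt unfolding e_def by auto
  have ex: "u 3 x = e" "u 3 y = e" "u 3 z = e" "u 3 w = - e" using pat unfolding e_def by auto
  have rx: "u 2 x = r" "u 2 y = r" "u 2 z = - r" using pat unfolding r_def by auto
  have o: "u 0 x = 1" "u 0 y = 1" "u 0 z = 1" "u 0 w = 1" using u0 lt by auto
  have px: "p x > 0" "p y > 0" "p z > 0" "p w > 0" using pp lt by auto
  have C00: "p x + p y + p z + p w = 1" using Cx[of 0 0] o by simp
  have C30: "e * (p x + p y + p z - p w) = 0" using Cx[of 3 0] o ex by (simp add: algebra_simps)
  have "e \<noteq> 0" using e2 by auto
  then have pw: "p w = 1/2" using C30 C00 by auto
  have C20: "p x * r + p y * r - p z * r + p w * u 2 w = 0" using Cx[of 2 0] o rx by simp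
  have C23: "e * (p x * r + p y * r - p z * r - p w * u 2 w) = 0"
    using Cx[of 2 3] ex rx by (simp add: algebra_simps)
  have "p x * r + p y * r - p z * r - p w * u 2 w = 0" using C23 \<open>e \<noteq> 0\<close> by simp
  then have "p w * u 2 w = 0" using C20 by linarith
  then have u2w: "u 2 w = 0" using px by simp
  have "0 = 1 - a * e" using sq2 lt u2w ex by fastforce
  then have ae: "a * e = 1" by simp
  have r2: "r\<^sup>2 = 2" using sq2 lt rx ex ae by fastforce
  have "r \<noteq> 0" using r2 by auto
  have C10: "p x * u 1 x + p y * u 1 y + p z * u 1 z + p w * u 1 w = 0" using Cx[of 1 0] o by simp
  have C13: "e * (p x * u 1 x + p y * u 1 y + p z * u 1 z - p w * u 1 w) = 0"
    using Cx[of 1 3] ex by (simp add: algebra_simps)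
  have "p x * u 1 x + p y * u 1 y + p z * u 1 z - p w * u 1 w = 0" using C13 \<open>e \<noteq> 0\<close> by simp
  then have "p w * u 1 w = 0" using C10 by linarith
  then have u1w: "u 1 w = 0" using px by simp
  have "0 = 1 - cc * e" using sq1 lt u1w u2w ex by fastforce
  then have ce: "cc * e = 1" by simp
  have "r * (p x + p y - p z) = 0" using C20 u2w by (simp add: algebra_simps)
  then have pz: "p z = p x + p y" using \<open>r \<noteq> 0\<close> by simp
  have C12: "r * (p x * u 1 x + p y * u 1 y - p z * u 1 z) = 0"
    using Cx[of 1 2] rx u2w by (simp add: algebra_simps)
  then have "p x * u 1 x + p y * u 1 y - p z * u 1 z = 0" using \<open>r \<noteq> 0\<close> by simp
  moreover have "p x * u 1 x + p y * u 1 y + p z * u 1 z = 0" using C10 u1w by simp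
  ultimately have "p z * u 1 z = 0" by linarith
  then have u1z: "u 1 z = 0" using px by simp
  have "0 = 1 - bb * r + cc * e" using sq1 lt u1z rx ex by fastforce
  then have br: "bb * r = 2" using ce by linarith
  have u1x2: "(u 1 x)\<^sup>2 = 4" using sq1 lt rx ex br ce by fastforce
  have u1y2: "(u 1 y)\<^sup>2 = 4" using sq1 lt rx ex br ce by fastforce
  have lin: "p x * u 1 x + p y * u 1 y = 0" using C10 u1z u1w by simp
  then have "(p x * u 1 x)\<^sup>2 = (p y * u 1 y)\<^sup>2" by (simp add: eq_neg_iff_add_eq_0[symmetric])
  then have "(p x)\<^sup>2 = (p y)\<^sup>2" using u1x2 u1y2 by (simp add: power_mult_distrib)
  then have pxy: "p x = p y" using px by (simp add: power2_eq_iff)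
  then have "p y * (u 1 x + u 1 y) = 0" using lin by (simp add: algebra_simps)
  then have u1y: "u 1 y = - u 1 x" using px by simp
  have pxv: "p x = 1/8" using C00 pw pz pxy by linarith
  have u1s: "u 1 x = 2 \<or> u 1 x = -2" using u1x2
    by (metis power2_eq_iff power2_eq_square mult_2_right numeral_Bit0 numeral_eq_iff)
  have rs: "r = sqrt 2 \<or> r = - sqrt 2" using sqrt2_cases r2 by blast
  have es: "e = 1 \<or> e = -1" using e2 by (simp add: power2_eq_1_iff)
  define s where "s = (\<lambda>j::nat. if j = 1 then u 1 x / 2 else if j = 2 then r / sqrt 2 else if j = 3 then e else 1)"
  show ?thesis unfolding Concl_def
  proof (intro exI conjI disjI2)
    show "perm4 x y z w permutes {..<4}" by (rule perm4_permutes[OF d lt])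
    show "\<forall>j<4. s j = 1 \<or> s j = - 1" using u1s rs es by (auto simp: all4 s_def)
    show "p (perm4 x y z w 0) = 1/8" "p (perm4 x y z w 1) = 1/8" "p (perm4 x y z w 2) = 1/4"
      "p (perm4 x y z w 3) = 1/2" using pxv pxy pz pw by (simp_all add: perm4_def)
    show "\<forall>i<4. \<forall>j<4. s j * u j (perm4 x y z w i) = rowsB ! i ! j"
      using u1s rs es o ex rx u1y u1z u1w u2w real_div_sqrt[of 2]
      by (auto simp: all4 s_def perm4_def rowsB_def)
  qed
qed


lemma coreA:
  assumes H: "Hyp p u" and d: "distinct [x,y,z,w]" and lt: "x < 4" "y < 4" "z < 4" "w < 4"
    and pat: "u 3 y = u 3 x" "u 3 z = - u 3 x" "u 3 w = - u 3 x" "u 2 y = - u 2 x" "u 2 w = - u 2 z"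
    and pq: "p x = 1/4" "p y = 1/4" "p z = 1/4" "p w = 1/4"
    and nn: "u 2 x \<ge> 0" "u 2 z \<ge> 0"
  shows "Concl p u"
proof -
  from H have u0: "\<forall>l<4. u 0 l = 1"
    and C: "\<forall>i<4. \<forall>j<4. (\<Sum>l<4. p l * u i l * u j l) = (if i=j then 1 else 0)"
    and sq3: "\<forall>l<4. (u 3 l)\<^sup>2 = 1"
    unfolding Hyp_def by blast+
  have Cx: "p x * u i x * u j x + p y * u i y * u j y + p z * u i z * u j z + p w * u i w * u j w
      = (if i=j then 1 else 0)" if "i < 4" "j < 4" for i j
    using C that by (simp add: sum_xyzw[OF d lt])
  define e where "e = u 3 x"
  define b where "b = u 2 x"
  define c where "c = u 2 z"
  define q where "q = u 1 x"
  define r where "r = u 1 z"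
  have e2: "e\<^sup>2 = 1" using sq3 lt unfolding e_def by auto
  have es: "e = 1 \<or> e = -1" using e2 by (simp add: power2_eq_1_iff)
  have ex: "u 3 x = e" "u 3 y = e" "u 3 z = - e" "u 3 w = - e" using pat unfolding e_def by auto
  have bx: "u 2 x = b" "u 2 y = - b" "u 2 z = c" "u 2 w = - c" using pat unfolding b_def c_def by auto
  have o: "u 0 x = 1" "u 0 y = 1" "u 0 z = 1" "u 0 w = 1" using u0 lt by auto
  have C10: "u 1 x + u 1 y + u 1 z + u 1 w = 0" using Cx[of 1 0] o pq by (simp add: algebra_simps)
  have C13: "e * (u 1 x + u 1 y - u 1 z - u 1 w) = 0" using Cx[of 1 3] ex pq by (simp add: algebra_simps)
  then have "u 1 x + u 1 y - u 1 z - u 1 w = 0" using e2 by auto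
  then have qy: "u 1 y = - q" "u 1 w = - r" using C10 unfolding q_def r_def by linarith+
  have bc: "b\<^sup>2 + c\<^sup>2 = 2" using Cx[of 2 2] pq bx by (simp add: power2_eq_square algebra_simps)
  have qr: "q\<^sup>2 + r\<^sup>2 = 2" using Cx[of 1 1] pq qy unfolding q_def r_def
    by (simp add: power2_eq_square algebra_simps)
  have qb: "q * b + r * c = 0" using Cx[of 1 2] pq bx qy unfolding q_def[symmetric] r_def[symmetric]
    by (simp add: algebra_simps)
  have qb': "q * b = - (r * c)" and qb'': "r * c = - (q * b)" using qb by linarith+
  define t where "t = (q * c - r * b) / 2"
  have "(q * c - r * b)\<^sup>2 + (q * b + r * c)\<^sup>2 = (q\<^sup>2 + r\<^sup>2) * (b\<^sup>2 + c\<^sup>2)"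
    by (simp add: power2_eq_square algebra_simps)
  then have "(q * c - r * b)\<^sup>2 = 4" using qb qr bc by simp
  then have t2: "t\<^sup>2 = 1" unfolding t_def by (simp add: power_divide)
  have ts: "t = 1 \<or> t = -1" using t2 by (simp add: power2_eq_1_iff)
  have tq: "t * q = c"
  proof -
    have "t * q = (q\<^sup>2 * c - q * r * b) / 2" unfolding t_def by (simp add: power2_eq_square algebra_simps)
    also have "q * r * b = r * (q * b)" by (simp add: mult_ac)
    also have "\<dots> = - r\<^sup>2 * c" using qb' by (simp add: power2_eq_square)
    finally have "t * q = (q\<^sup>2 + r\<^sup>2) * c / 2" by (simp add: algebra_simps)
    then show ?thesis using qr by simp
  qed
  have tr: "t * r = - b"
  proof -
    have "t * r = (q * r * c - r\<^sup>2 * b) / 2" unfolding t_def by (simp add: power2_eq_square algebra_simps)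
    also have "q * r * c = q * (r * c)" by (simp add: mult_ac)
    also have "\<dots> = - q\<^sup>2 * b" using qb'' by (simp add: power2_eq_square)
    finally have "t * r = - ((q\<^sup>2 + r\<^sup>2) * b) / 2" by (simp add: algebra_simps)
    then show ?thesis using qr by simp
  qed
  define s where "s = (\<lambda>j::nat. if j = 1 then t else if j = 3 then e else 1)"
  show ?thesis unfolding Concl_def
  proof (intro exI conjI disjI1)
    show "perm4 x y z w permutes {..<4}" by (rule perm4_permutes[OF d lt])
    show "\<forall>j<4. s j = 1 \<or> s j = - 1" using ts es by (auto simp: all4 s_def)
    show "\<forall>i<4. p (perm4 x y z w i) = 1/4" using pq by (simp add: all4 perm4_def)
    show "b \<ge> 0" "c \<ge> 0" using nn unfolding b_def c_def by auto
    show "b\<^sup>2 + c\<^sup>2 = 2" by (rule bc)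
    have tq': "t * u 1 x = c" "t * u 1 y = - c" "t * u 1 z = - b" "t * u 1 w = b"
      using tq tr qy unfolding q_def r_def by auto
    show "\<forall>i<4. \<forall>j<4. s j * u j (perm4 x y z w i) = rowsA b c ! i ! j"
      using es o ex bx tq'
      by (auto simp: all4 s_def perm4_def rowsA_def)
  qed
qed

lemma eq_weights:
  fixes px py u v :: real
  assumes "px * u + py * v = 0" "u\<^sup>2 = v\<^sup>2" "u \<noteq> 0" "px > 0" "py > 0"
  shows "px = py"
proof -
  have "(px * u)\<^sup>2 = (py * v)\<^sup>2" using assms(1) by (simp add: eq_neg_iff_add_eq_0[symmetric])
  then have "px\<^sup>2 * u\<^sup>2 = py\<^sup>2 * u\<^sup>2" using assms(2) by (simp add: power_mult_distrib)
  then have "px\<^sup>2 = py\<^sup>2" using assms(3) by simp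
  then show ?thesis using assms by (simp add: power2_eq_iff)
qed

lemma pairEq:
  assumes H: "Hyp p u" and d: "distinct [x,y,z,w]" and lt: "x < 4" "y < 4" "z < 4" "w < 4"
    and pat: "u 3 y = u 3 x" "u 3 z = - u 3 x" "u 3 w = - u 3 x"
  shows "p x = p y"
proof -
  from H obtain a bb cc where pp: "\<forall>i<4. p i > 0" and u0: "\<forall>l<4. u 0 l = 1"
    and C: "\<forall>i<4. \<forall>j<4. (\<Sum>l<4. p l * u i l * u j l) = (if i=j then 1 else 0)"
    and R: "\<forall>l<4. \<forall>m<4. l \<noteq> m \<longrightarrow> (\<Sum>k<4. u k l * u k m) = 0"
    and sq3: "\<forall>l<4. (u 3 l)\<^sup>2 = 1" and sq2: "\<forall>l<4. (u 2 l)\<^sup>2 = 1 + a * u 3 l"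
    and sq1: "\<forall>l<4. (u 1 l)\<^sup>2 = 1 + bb * u 2 l + cc * u 3 l"
    unfolding Hyp_def by blast
  have Cx: "p x * u i x * u j x + p y * u i y * u j y + p z * u i z * u j z + p w * u i w * u j w
      = (if i=j then 1 else 0)" if "i < 4" "j < 4" for i j
    using C that by (simp add: sum_xyzw[OF d lt])
  define e where "e = u 3 x"
  have e2: "e\<^sup>2 = 1" using sq3 lt unfolding e_def by auto
  have ex: "u 3 x = e" "u 3 y = e" "u 3 z = - e" "u 3 w = - e" using pat unfolding e_def by auto
  have o: "u 0 x = 1" "u 0 y = 1" "u 0 z = 1" "u 0 w = 1" using u0 lt by auto
  have px: "p x > 0" "p y > 0" using pp lt by auto
  have lin: "p x * u k x + p y * u k y = 0" if "0 < k" "k < 3" for k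
  proof -
    have C0: "p x * u k x + p y * u k y + p z * u k z + p w * u k w = 0"
      using Cx[of k 0] o that by (simp add: split: if_splits)
    have "e * (p x * u k x + p y * u k y - p z * u k z - p w * u k w) = (if k = 3 then 1 else 0)"
      using Cx[of k 3] ex that by (simp add: algebra_simps)
    show ?thesis
    proof -
      have "e * (p x * u k x + p y * u k y - p z * u k z - p w * u k w) = 0"
        using \<open>e * _ = _\<close> that by simp
      then have "p x * u k x + p y * u k y - p z * u k z - p w * u k w = 0" using e2 by auto
      then show ?thesis using C0 by linarith
    qed
  qed
  have r2: "(u 2 x)\<^sup>2 = (u 2 y)\<^sup>2" using sq2 lt ex by auto
  show ?thesis
  proof (cases "u 2 x = 0")
    case False
    then show ?thesis using eq_weights[OF lin[of 2] r2 False px] by simp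
  next
    case True
    then have y0: "u 2 y = 0" using r2 by simp
    have r1: "(u 1 x)\<^sup>2 = (u 1 y)\<^sup>2" using sq1 lt ex True y0 by auto
    show ?thesis
    proof (cases "u 1 x = 0")
      case False
      then show ?thesis using eq_weights[OF lin[of 1] r1 False px] by simp
    next
      case True2: True
      then have "u 1 y = 0" using r1 by simp
      moreover have "(\<Sum>k<4. u k x * u k y) = 0" using R lt d by auto
      ultimately have "1 + e * e = 0" using o True True2 y0 ex by (simp add: sum4)
      then show ?thesis using e2 by (simp add: power2_eq_square)
    qed
  qed
qed


lemma core22:
  assumes H: "Hyp p u" and d: "distinct [x,y,z,w]" and lt: "x < 4" "y < 4" "z < 4" "w < 4"
    and pat: "u 3 y = u 3 x" "u 3 z = - u 3 x" "u 3 w = - u 3 x"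
  shows "Concl p u"
proof -
  from H have pp: "\<forall>i<4. p i > 0" and u0: "\<forall>l<4. u 0 l = 1"
    and C: "\<forall>i<4. \<forall>j<4. (\<Sum>l<4. p l * u i l * u j l) = (if i=j then 1 else 0)"
    and sq3: "\<forall>l<4. (u 3 l)\<^sup>2 = 1"
    unfolding Hyp_def by blast+
  have Cx: "p x * u i x * u j x + p y * u i y * u j y + p z * u i z * u j z + p w * u i w * u j w
      = (if i=j then 1 else 0)" if "i < 4" "j < 4" for i j
    using C that by (simp add: sum_xyzw[OF d lt])
  define e where "e = u 3 x"
  have e2: "e\<^sup>2 = 1" using sq3 lt unfolding e_def by auto
  have ex: "u 3 x = e" "u 3 y = e" "u 3 z = - e" "u 3 w = - e" using pat unfolding e_def by auto
  have o: "u 0 x = 1" "u 0 y = 1" "u 0 z = 1" "u 0 w = 1" using u0 lt by auto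
  have pos: "p x > 0" "p y > 0" "p z > 0" "p w > 0" using pp lt by auto
  have pxy: "p x = p y" by (rule pairEq[OF H d lt pat])
  have d2: "distinct [z,w,x,y]" using d by auto
  have pzw: "p z = p w" by (rule pairEq[OF H d2 lt(3,4,1,2)]) (use pat in auto)
  have C00: "p x + p y + p z + p w = 1" using Cx[of 0 0] o by simp
  have "e * (p x + p y - p z - p w) = 0" using Cx[of 3 0] o ex by (simp add: algebra_simps)
  then have "p x + p y - p z - p w = 0" using e2 by auto
  then have pq: "p x = 1/4" "p y = 1/4" "p z = 1/4" "p w = 1/4" using C00 pxy pzw by linarith+
  have C20: "u 2 x + u 2 y + u 2 z + u 2 w = 0" using Cx[of 2 0] o pq by (simp add: algebra_simps)
  have "e * (u 2 x + u 2 y - u 2 z - u 2 w) = 0" using Cx[of 2 3] ex pq by (simp add: algebra_simps)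
  then have "u 2 x + u 2 y - u 2 z - u 2 w = 0" using e2 by auto
  then have u2: "u 2 y = - u 2 x" "u 2 w = - u 2 z" using C20 by linarith+
  have dyx: "distinct [y,x,z,w]" "distinct [x,y,w,z]" "distinct [y,x,w,z]" using d by auto
  show ?thesis
  proof (cases "u 2 x \<ge> 0")
    case True
    show ?thesis
    proof (cases "u 2 z \<ge> 0")
      case True2: True
      show ?thesis by (rule coreA[OF H d lt]) (use pat u2 pq True True2 in auto)
    next
      case False
      show ?thesis by (rule coreA[OF H dyx(2) lt(1,2,4,3)]) (use pat u2 pq True False in auto)
    qed
  next
    case False
    show ?thesis
    proof (cases "u 2 z \<ge> 0")
      case True2: True
      show ?thesis by (rule coreA[OF H dyx(1) lt(2,1,3,4)]) (use pat u2 pq False True2 in auto)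
    next
      case False2: False
      show ?thesis by (rule coreA[OF H dyx(3) lt(2,1,4,3)]) (use pat u2 pq False False2 in auto)
    qed
  qed
qed

lemma core13:
  assumes H: "Hyp p u" and d: "distinct [x,y,z,w]" and lt: "x < 4" "y < 4" "z < 4" "w < 4"
    and pat: "u 3 y = u 3 x" "u 3 z = u 3 x" "u 3 w = - u 3 x"
  shows "Concl p u"
proof -
  from H obtain a where pp: "\<forall>i<4. p i > 0" and u0: "\<forall>l<4. u 0 l = 1"
    and C: "\<forall>i<4. \<forall>j<4. (\<Sum>l<4. p l * u i l * u j l) = (if i=j then 1 else 0)"
    and sq3: "\<forall>l<4. (u 3 l)\<^sup>2 = 1" and sq2: "\<forall>l<4. (u 2 l)\<^sup>2 = 1 + a * u 3 l"
    unfolding Hyp_def by blast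
  have Cx: "p x * u i x * u j x + p y * u i y * u j y + p z * u i z * u j z + p w * u i w * u j w
      = (if i=j then 1 else 0)" if "i < 4" "j < 4" for i j
    using C that by (simp add: sum_xyzw[OF d lt])
  define e where "e = u 3 x"
  have e2: "e\<^sup>2 = 1" using sq3 lt unfolding e_def by auto
  have ex: "u 3 x = e" "u 3 y = e" "u 3 z = e" "u 3 w = - e" using pat unfolding e_def by auto
  have o: "u 0 x = 1" "u 0 y = 1" "u 0 z = 1" "u 0 w = 1" using u0 lt by auto
  have pos: "p x > 0" "p y > 0" "p z > 0" "p w > 0" using pp lt by auto
  have C20: "p x * u 2 x + p y * u 2 y + p z * u 2 z + p w * u 2 w = 0" using Cx[of 2 0] o by simp
  have "e * (p x * u 2 x + p y * u 2 y + p z * u 2 z - p w * u 2 w) = 0"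
    using Cx[of 2 3] ex by (simp add: algebra_simps)
  then have "p x * u 2 x + p y * u 2 y + p z * u 2 z - p w * u 2 w = 0" using e2 by auto
  then have "p w * u 2 w = 0" using C20 by linarith
  then have u2w: "u 2 w = 0" using pos by simp
  have "0 = 1 - a * e" using sq2 lt u2w ex by fastforce
  then have ae: "a * e = 1" by simp
  have r2: "(u 2 x)\<^sup>2 = 2" "(u 2 y)\<^sup>2 = 2" "(u 2 z)\<^sup>2 = 2" using sq2 lt ex ae by fastforce+
  have yy: "u 2 y = u 2 x \<or> u 2 y = - u 2 x" using r2 by (metis power2_eq_iff)
  have zz: "u 2 z = u 2 x \<or> u 2 z = - u 2 x" using r2 by (metis power2_eq_iff)
  show ?thesis
  proof (cases "u 2 y = u 2 x")
    case True
    show ?thesis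
    proof (cases "u 2 z = u 2 x")
      case True2: True
      have "u 2 x * (p x + p y + p z) = 0" using C20 u2w True True2 by (simp add: algebra_simps)
      moreover have "u 2 x \<noteq> 0" using r2 by auto
      ultimately show ?thesis using pos by simp
    next
      case False
      then have "u 2 z = - u 2 x" using zz by simp
      then show ?thesis by (intro coreB[OF H d lt]) (use pat True in auto)
    qed
  next
    case False
    then have y': "u 2 y = - u 2 x" using yy by simp
    show ?thesis
    proof (cases "u 2 z = u 2 x")
      case True2: True
      have d': "distinct [x,z,y,w]" using d by auto
      show ?thesis by (intro coreB[OF H d' lt(1,3,2,4)]) (use pat True2 y' in auto)
    next
      case False2: False
      then have z': "u 2 z = - u 2 x" using zz by simp
      have d': "distinct [y,z,x,w]" using d by auto
      show ?thesis by (intro coreB[OF H d' lt(2,3,1,4)]) (use pat y' z' in auto)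
    qed
  qed
qed

lemma main_scalar:
  assumes H: "Hyp p u"
  shows "Concl p u"
proof -
  from H have pp: "\<forall>i<4. p i > 0" and u0: "\<forall>l<4. u 0 l = 1"
    and C: "\<forall>i<4. \<forall>j<4. (\<Sum>l<4. p l * u i l * u j l) = (if i=j then 1 else 0)"
    and sq3: "\<forall>l<4. (u 3 l)\<^sup>2 = 1"
    unfolding Hyp_def by blast+
  have pm: "u 3 i = 1 \<or> u 3 i = -1" if "i < 4" for i
    using sq3 that by (simp add: power2_eq_1_iff)
  have ne: "u 3 i \<noteq> u 3 0 \<Longrightarrow> u 3 i = - u 3 0" if "i < 4" for i
    using pm[OF that] pm[of 0] by auto
  have C30: "p 0 * u 3 0 + p 1 * u 3 1 + p 2 * u 3 2 + p 3 * u 3 3 = 0"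
    using C u0 by (simp add: sum4 all4)
  have notall: "\<not> (u 3 1 = u 3 0 \<and> u 3 2 = u 3 0 \<and> u 3 3 = u 3 0)"
  proof
    assume a: "u 3 1 = u 3 0 \<and> u 3 2 = u 3 0 \<and> u 3 3 = u 3 0"
    then have "u 3 0 * (p 0 + p 1 + p 2 + p 3) = 0" using C30 by (simp add: algebra_simps)
    moreover have "u 3 0 \<noteq> 0" using pm[of 0] by auto
    moreover have "p 0 + p 1 + p 2 + p 3 > 0" using pp by (simp add: all4)
    ultimately show False by simp
  qed
  have l: "(0::nat) < 4" "(1::nat) < 4" "(2::nat) < 4" "(3::nat) < 4" by auto
  consider (a) "u 3 1 = u 3 0" "u 3 2 = u 3 0" "u 3 3 \<noteq> u 3 0"
    | (b) "u 3 1 = u 3 0" "u 3 2 \<noteq> u 3 0" "u 3 3 = u 3 0"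
    | (c) "u 3 1 \<noteq> u 3 0" "u 3 2 = u 3 0" "u 3 3 = u 3 0"
    | (d) "u 3 1 = u 3 0" "u 3 2 \<noteq> u 3 0" "u 3 3 \<noteq> u 3 0"
    | (e) "u 3 1 \<noteq> u 3 0" "u 3 2 = u 3 0" "u 3 3 \<noteq> u 3 0"
    | (f) "u 3 1 \<noteq> u 3 0" "u 3 2 \<noteq> u 3 0" "u 3 3 = u 3 0"
    | (g) "u 3 1 \<noteq> u 3 0" "u 3 2 \<noteq> u 3 0" "u 3 3 \<noteq> u 3 0"
    using notall by blast
  then show ?thesis
  proof cases
    case a then show ?thesis using ne[of 3] by (intro core13[OF H _ l(1,2,3,4)]) auto
  next
    case b then show ?thesis using ne[of 2] by (intro core13[OF H _ l(1,2,4,3)]) auto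
  next
    case c then show ?thesis using ne[of 1] by (intro core13[OF H _ l(1,3,4,2)]) auto
  next
    case d then show ?thesis using ne[of 2] ne[of 3] by (intro core22[OF H _ l(1,2,3,4)]) auto
  next
    case e then show ?thesis using ne[of 1] ne[of 3] by (intro core22[OF H _ l(1,3,2,4)]) auto
  next
    case f then show ?thesis using ne[of 1] ne[of 2] by (intro core22[OF H _ l(1,4,2,3)]) auto
  next
    case g then show ?thesis using ne[of 1] ne[of 2] ne[of 3]
      by (intro core13[OF H _ l(2,3,4,1)]) auto
  qed
qed


lemma mat_eq4:
  assumes "\<forall>i<4. \<forall>j<4. f i j = rs ! i ! j" "length rs = 4"
  shows "mat 4 4 (\<lambda>(i,j). f i j) = mat_of_rows_list 4 rs"
  using assms by (intro eq_matI) (auto simp: mat_of_rows_list_def)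

theorem lemma2:
  fixes p :: "nat \<Rightarrow> real" and Q U :: "real mat" and l2 l3 l4 :: real
  assumes p_pos: "\<forall>i<4. p i > 0"
    and p_sum: "(\<Sum>i<4. p i) = 1"
    and Q_dim: "Q \<in> carrier_mat 4 4"
    and Q_off: "\<forall>i<4. \<forall>j<4. i \<noteq> j \<longrightarrow> Q $$ (i, j) > 0"
    and Q_rows: "\<forall>i<4. (\<Sum>j<4. Q $$ (i, j)) = 0"
    and Q_rev: "transpose_mat (mat_diag 4 p * Q) = mat_diag 4 p * Q"
    and U_dim: "U \<in> carrier_mat 4 4"
    and eig: "0 > l2" "l2 \<ge> l3" "l3 \<ge> l4"
    and U_diag: "\<exists>V \<in> carrier_mat 4 4. U * V = 1\<^sub>m 4 \<and> V * U = 1\<^sub>m 4 \<and>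
                   Q = U * mat_diag 4 (\<lambda>i. [0, l2, l3, l4] ! i) * V"
    and U_orth: "U * transpose_mat U = mat_diag 4 (\<lambda>i. 1 / p i)"
    and U_col1: "\<forall>i<4. U $$ (i, 0) = 1"
    and nu0: "\<forall>i j. 0 < i \<longrightarrow> i \<le> j \<longrightarrow> j < 4 \<longrightarrow> nu p U i j j = 0"
  shows "\<exists>\<sigma> s. \<sigma> permutes {..<4} \<and> (\<forall>j<4. s j = 1 \<or> s j = (-1::real)) \<and>
          (let U' = mat 4 4 (\<lambda>(i, j). s j * U $$ (\<sigma> i, j)) in
            ((\<forall>i<4. p (\<sigma> i) = 1/4) \<and>
             (\<exists>b c. b \<ge> 0 \<and> c \<ge> 0 \<and> b\<^sup>2 + c\<^sup>2 = 2 \<and>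
                U' = mat_of_rows_list 4 [[1, c, b, 1], [1, -c, -b, 1], [1, -b, c, -1], [1, b, -c, -1]]))
          \<or> (p (\<sigma> 0) = 1/8 \<and> p (\<sigma> 1) = 1/8 \<and> p (\<sigma> 2) = 1/4 \<and> p (\<sigma> 3) = 1/2 \<and>
             U' = mat_of_rows_list 4 [[1, 2, sqrt 2, 1], [1, -2, sqrt 2, 1], [1, 0, -sqrt 2, 1], [1, 0, 0, -1]]))"
proof -
  define u where "u = (\<lambda>k l. U $$ (l, k))"
  have ef: "\<forall>l<4. \<forall>m<4. (\<Sum>k<4. U$$(l,k) * U$$(m,k)) = (if l=m then 1/p l else 0)"
    "\<forall>i<4. \<forall>j<4. (\<Sum>l<4. p l * U$$(l,i) * U$$(l,j)) = (if i=j then 1 else 0)"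
    using extract_facts[OF U_dim U_orth p_pos] by auto
  have R: "\<forall>l<4. \<forall>m<4. (\<Sum>k<4. u k l * u k m) = (if l=m then 1/p l else 0)"
    using ef(1) unfolding u_def by simp
  have C: "\<forall>i<4. \<forall>j<4. (\<Sum>l<4. p l * u i l * u j l) = (if i=j then 1 else 0)"
    using ef(2) unfolding u_def by simp
  have u0: "\<forall>l<4. u 0 l = 1" using U_col1 unfolding u_def by simp
  have N: "\<forall>i j. 0 < i \<longrightarrow> i \<le> j \<longrightarrow> j < 4 \<longrightarrow> (\<Sum>l<4. p l * u i l * u j l * u j l) = 0"
    using nu0 unfolding u_def nu_def by simp
  note sq = squares[OF R C p_pos u0 N]
  have "Hyp p u" unfolding Hyp_def using p_pos u0 C R sq by auto
  then have "Concl p u" by (rule main_scalar)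
  then obtain \<sigma> s where sig: "\<sigma> permutes {..<4}" and sg: "\<forall>j<4. s j = 1 \<or> s j = (-1::real)"
    and cs: "((\<forall>i<4. p (\<sigma> i) = 1/4) \<and> (\<exists>b c. b \<ge> 0 \<and> c \<ge> 0 \<and> b\<^sup>2 + c\<^sup>2 = 2 \<and>
          (\<forall>i<4. \<forall>j<4. s j * u j (\<sigma> i) = rowsA b c ! i ! j)))
      \<or> (p (\<sigma> 0) = 1/8 \<and> p (\<sigma> 1) = 1/8 \<and> p (\<sigma> 2) = 1/4 \<and> p (\<sigma> 3) = 1/2 \<and>
          (\<forall>i<4. \<forall>j<4. s j * u j (\<sigma> i) = rowsB ! i ! j))"
    unfolding Concl_def by blast
  show ?thesis
  proof (intro exI conjI)
    show "\<sigma> permutes {..<4}" by (rule sig)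
    show "\<forall>j<4. s j = 1 \<or> s j = (-1::real)" by (rule sg)
    show "let U' = mat 4 4 (\<lambda>(i, j). s j * U $$ (\<sigma> i, j)) in
            ((\<forall>i<4. p (\<sigma> i) = 1/4) \<and>
             (\<exists>b c. b \<ge> 0 \<and> c \<ge> 0 \<and> b\<^sup>2 + c\<^sup>2 = 2 \<and>
                U' = mat_of_rows_list 4 [[1, c, b, 1], [1, -c, -b, 1], [1, -b, c, -1], [1, b, -c, -1]]))
          \<or> (p (\<sigma> 0) = 1/8 \<and> p (\<sigma> 1) = 1/8 \<and> p (\<sigma> 2) = 1/4 \<and> p (\<sigma> 3) = 1/2 \<and>
             U' = mat_of_rows_list 4 [[1, 2, sqrt 2, 1], [1, -2, sqrt 2, 1], [1, 0, -sqrt 2, 1], [1, 0, 0, -1]])"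
    proof (rule disjE[OF cs])
      assume A: "(\<forall>i<4. p (\<sigma> i) = 1/4) \<and> (\<exists>b c. b \<ge> 0 \<and> c \<ge> 0 \<and> b\<^sup>2 + c\<^sup>2 = 2 \<and>
          (\<forall>i<4. \<forall>j<4. s j * u j (\<sigma> i) = rowsA b c ! i ! j))"
      then obtain b c where bc: "b \<ge> 0" "c \<ge> 0" "b\<^sup>2 + c\<^sup>2 = 2"
        and E: "\<forall>i<4. \<forall>j<4. s j * u j (\<sigma> i) = rowsA b c ! i ! j" by blast
      have "mat 4 4 (\<lambda>(i, j). s j * U $$ (\<sigma> i, j)) = mat_of_rows_list 4 (rowsA b c)"
        using E unfolding u_def by (intro mat_eq4) (auto simp: rowsA_def)
      moreover have "\<forall>i<4. p (\<sigma> i) = 1/4" using A by blast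
      ultimately show ?thesis using bc unfolding rowsA_def Let_def by blast
    next
      assume B: "p (\<sigma> 0) = 1/8 \<and> p (\<sigma> 1) = 1/8 \<and> p (\<sigma> 2) = 1/4 \<and> p (\<sigma> 3) = 1/2 \<and>
          (\<forall>i<4. \<forall>j<4. s j * u j (\<sigma> i) = rowsB ! i ! j)"
      have "mat 4 4 (\<lambda>(i, j). s j * U $$ (\<sigma> i, j)) = mat_of_rows_list 4 rowsB"
        using B unfolding u_def by (intro mat_eq4) (auto simp: rowsB_def)
      moreover have "p (\<sigma> 0) = 1/8 \<and> p (\<sigma> 1) = 1/8 \<and> p (\<sigma> 2) = 1/4 \<and> p (\<sigma> 3) = 1/2" using B by blast
      ultimately show ?thesis unfolding rowsB_def Let_def by blast
    qed
  qed
qed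

end
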